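(* Let $H\in\mathbb R^{T\times d_L}$, $X\in\mathbb R^{|V|\times d_R}$, $P\in\mathbb R^{n_P}$ (Frobenius/Euclidean inner products), let $\tau_{R\to L},\tau_{L\to R}\ge0$ be arbitrary finite delays, and consider the closed principal system \[ \dot H(t)=A_L(H(t))+\mathcal K X(t-\tau_{R\to L}),\quad \dot X(t)=A_R(X(t))+\mathcal K^* H(t-\tau_{L\to R}),\quad \dot P(t)=A_P(P(t)), \] where $\mathcal K:\mathbb R^{|V|\times d_R}\to\mathbb R^{T\times d_L}$ is a fixed linear operator with adjoint $\mathcal K^*$ and $\|\mathcal K\|_{\mathrm{op}}\le\|\mathcal K\|_{\mathrm{HS}}\le C_{\mathcal K}$, and $A_L,A_R,A_P$ are Lipschitz maps (the instantaneous principal vector fields, e.g. $A_L(H)=-\Delta_{G_L}(Q_L)H+F_L(H)$ and $A_R(X)=-\Delta_{G_R}(W_R)X+F_R(X)$ with all auxiliary variables frozen) which are one-sided dissipative: \[ \langle A_L(u)-A_L(v),u-v\rangle\le-\mu_L\|u-v\|^2,\ \langle A_R(u)-A_R(v),u-v\rangle\le-\mu_R\|u-v\|^2,\ \langle A_P(u)-A_P(v),u-v\rangle\le-\mu_P\|u-v\|^2 \] with $\mu_L,\mu_R,\mu_P>0$. Assume the system evolves in a compact positively invariant set (of the form of a product of closed balls) and has an equilibrium $(H^*,X^*,P^* )$ there, and assume the small-gain condition $C_{\mathcal K}^2<\mu_L\mu_R$. Then the equilibrium $(H^*,X^*,P^* )$ is unique and globally asymptotically stable, for all finite delays. Moreover,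 with $\tilde\varphi=(\tilde\varphi_L,\tilde\varphi_R,\tilde\varphi_P)$ denoting a history centered at the equilibrium, the Lyapunov–Krasovskii functional \[ V(\tilde\varphi)=\tfrac12\|\tilde\varphi_L(0)\|^2+\tfrac12\|\tilde\varphi_R(0)\|^2+\tfrac12\|\tilde\varphi_P(0)\|^2+\tfrac{C_{\mathcal K}^2}{2\mu_L}\int_{-\tau_{R\to L}}^0\|\tilde\varphi_R(s)\|^2ds+\tfrac{C_{\mathcal K}^2}{2\mu_R}\int_{-\tau_{L\to R}}^0\|\tilde\varphi_L(s)\|^2ds \] satisfies along solutions \[ \dot V\le-\alpha_L\|\tilde H(t)\|^2-\alpha_R\|\tilde X(t)\|^2-\mu_P\|\tilde P(t)\|^2, \] where $\tilde H=H-H^*$, $\tilde X=X-X^*$, $\tilde P=P-P^*$, $\alpha_L=\mu_L/2-C_{\mathcal K}^2/(2\mu_R)>0$ and $\alpha_R=\mu_R/2-C_{\mathcal K}^2/(2\mu_L)>0$.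
   Context: $H$ is a symbolic field on a connected finite graph $G_L$ with node set $\{1,\dots,T\}$ and $X$ a geometric field on a connected finite graph $G_R$ with node set $V$; $\Delta_{G_L}(Q_L)$, $\Delta_{G_R}(W_R)$ are weighted graph Laplacians with edge weights frozen at equilibrium values, and $F_L,F_R$ reaction terms. The operator $\mathcal K$ is induced by a kernel $\mathcal K(\ell,i)\in\mathbb R^{d_L\times d_R}$ via $(\mathcal K X)_\ell=\sum_i\mathcal K(\ell,i)x_i$, with $\|\mathcal K\|_{\mathrm{HS}}^2=\sum_{\ell,i}\|\mathcal K(\ell,i)\|_F^2$. Globally asymptotically stable means Lyapunov stable and every solution with admissible initial history converges to the equilibrium as $t\to\infty$. *)

theory Defs
  imports "HOL-Analysis.Analysis"
begin

definition kernel_op ::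
  "('t::finite \<Rightarrow> 'v::finite \<Rightarrow> real^'dR^'dL) \<Rightarrow> real^'dR^'v \<Rightarrow> real^'dL^'t" where
  "kernel_op k X = (\<chi> l. \<Sum>i\<in>UNIV. k l i *v (X $ i))"

text \<open>Hilbert-Schmidt norm: sqrt of sum of squared Frobenius norms of the blocks
  (the norm on real^'dR^'dL is the Frobenius norm).\<close>
definition hs_norm :: "('t::finite \<Rightarrow> 'v::finite \<Rightarrow> real^'dR^'dL) \<Rightarrow> real" where
  "hs_norm k = sqrt (\<Sum>l\<in>UNIV. \<Sum>i\<in>UNIV. (norm (k l i))\<^sup>2)"

text \<open>Solution of the closed principal delay system on [-tau, infinity),
  tau = max of the two delays; the history is the restriction to [-tau,0].\<close>
definition is_solution ::
  "('l::euclidean_space \<Rightarrow> 'l) \<Rightarrow> ('r::euclidean_space \<Rightarrow> 'r) \<Rightarrow> ('p::euclidean_space \<Rightarrow> 'p)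
   \<Rightarrow> ('r \<Rightarrow> 'l) \<Rightarrow> real \<Rightarrow> real
   \<Rightarrow> (real \<Rightarrow> 'l) \<Rightarrow> (real \<Rightarrow> 'r) \<Rightarrow> (real \<Rightarrow> 'p) \<Rightarrow> bool" where
  "is_solution aL aR aP K tauRL tauLR H X P \<longleftrightarrow>
     (let tau = max tauRL tauLR in
       continuous_on {-tau..} H \<and> continuous_on {-tau..} X \<and> continuous_on {-tau..} P \<and>
       (\<forall>t\<ge>0. (H has_vector_derivative (aL (H t) + K (X (t - tauRL)))) (at t within {0..})
             \<and> (X has_vector_derivative (aR (X t) + adjoint K (H (t - tauLR)))) (at t within {0..})
             \<and> (P has_vector_derivative (aP (P t))) (at t within {0..})))"

definition is_equilibrium ::
  "('l::euclidean_space \<Rightarrow> 'l) \<Rightarrow> ('r::euclidean_space \<Rightarrow> 'r) \<Rightarrow> ('p::euclidean_space \<Rightarrow> 'p)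
   \<Rightarrow> ('r \<Rightarrow> 'l) \<Rightarrow> 'l \<Rightarrow> 'r \<Rightarrow> 'p \<Rightarrow> bool" where
  "is_equilibrium aL aR aP K Hs Xs Ps \<longleftrightarrow>
     aL Hs + K Xs = 0 \<and> aR Xs + adjoint K Hs = 0 \<and> aP Ps = 0"

definition history_in ::
  "real \<Rightarrow> ('l \<times> 'r \<times> 'p) set \<Rightarrow> (real \<Rightarrow> 'l) \<Rightarrow> (real \<Rightarrow> 'r) \<Rightarrow> (real \<Rightarrow> 'p) \<Rightarrow> bool" where
  "history_in tau S H X P \<longleftrightarrow> (\<forall>s\<in>{-tau..0}. (H s, X s, P s) \<in> S)"

definition one_sided_dissipative :: "('a::real_inner \<Rightarrow> 'a) \<Rightarrow> real \<Rightarrow> bool" where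
  "one_sided_dissipative A mu \<longleftrightarrow> (\<forall>u v. inner (A u - A v) (u - v) \<le> - mu * (norm (u - v))\<^sup>2)"

definition LKV ::
  "real \<Rightarrow> real \<Rightarrow> real \<Rightarrow> real \<Rightarrow> real \<Rightarrow>
   (real \<Rightarrow> 'l::real_normed_vector) \<Rightarrow> (real \<Rightarrow> 'r::real_normed_vector) \<Rightarrow> (real \<Rightarrow> 'p::real_normed_vector) \<Rightarrow> real" where
  "LKV C muL muR tauRL tauLR phL phR phP =
     (norm (phL 0))\<^sup>2 / 2 + (norm (phR 0))\<^sup>2 / 2 + (norm (phP 0))\<^sup>2 / 2
     + C\<^sup>2 / (2 * muL) * integral {-tauRL..0} (\<lambda>s. (norm (phR s))\<^sup>2)
     + C\<^sup>2 / (2 * muR) * integral {-tauLR..0} (\<lambda>s. (norm (phL s))\<^sup>2)"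

end

theory Submission
  imports Defs
begin

lemma normsq_deriv:
  fixes h :: "real \<Rightarrow> 'a::real_inner"
  assumes "(h has_vector_derivative v) (at t)"
  shows "((\<lambda>r. (norm (h r))\<^sup>2) has_real_derivative 2 * inner (h t) v) (at t)"
proof -
  have d: "(h has_derivative (\<lambda>x. x *\<^sub>R v)) (at t)"
    using assms by (simp add: has_vector_derivative_def)
  have "((\<lambda>r. inner (h r) (h r)) has_derivative (\<lambda>x. inner (h t) (x *\<^sub>R v) + inner (x *\<^sub>R v) (h t))) (at t)"
    by (rule has_derivative_inner[OF d d])
  moreover have "(\<lambda>x. inner (h t) (x *\<^sub>R v) + inner (x *\<^sub>R v) (h t)) = (*) (2 * inner (h t) v)"
    by (auto simp: inner_commute algebra_simps)
  ultimately show ?thesis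
    by (simp add: has_field_derivative_def power2_norm_eq_inner)
qed

lemma kernel_linear: "linear (kernel_op k)"
  unfolding kernel_op_def
  by (rule linearI) (auto simp: vec_eq_iff matrix_vector_right_distrib sum.distrib
       scaleR_sum_right matrix_vector_mult_scaleR)

lemma young: fixes mu u w :: real assumes "mu > 0"
  shows "u * w \<le> mu / 2 * u\<^sup>2 + w\<^sup>2 / (2 * mu)"
proof -
  have "0 \<le> (mu * u - w)\<^sup>2 / (2 * mu)" using assms by simp
  also have "(mu * u - w)\<^sup>2 / (2 * mu) = mu / 2 * u\<^sup>2 + w\<^sup>2 / (2 * mu) - u * w"
    using assms by (simp add: field_simps power2_eq_square)
  finally show ?thesis by simp
qed

lemma Kop_bound:
  fixes K :: "'r::euclidean_space \<Rightarrow> 'l::euclidean_space"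
  assumes "linear K" "onorm K \<le> C"
  shows "norm (K x) \<le> C * norm x" "0 \<le> C"
proof -
  have bl: "bounded_linear K" using assms(1) linear_conv_bounded_linear by blast
  show "norm (K x) \<le> C * norm x"
    using onorm[OF bl, of x] assms(2) by (meson mult_right_mono norm_ge_zero order_trans)
  show "0 \<le> C" using onorm_pos_le[OF bl] assms(2) by linarith
qed

lemma K_inner:
  fixes K :: "'r::euclidean_space \<Rightarrow> 'l::euclidean_space"
  assumes "linear K" "onorm K \<le> C"
  shows "inner h (K x) \<le> C * norm h * norm x" "inner x (adjoint K h) \<le> C * norm h * norm x"
proof -
  have "inner h (K x) \<le> norm h * norm (K x)" by (rule norm_cauchy_schwarz)
  also have "\<dots> \<le> norm h * (C * norm x)" by (rule mult_left_mono[OF Kop_bound(1)[OF assms]]) simp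
  finally show "inner h (K x) \<le> C * norm h * norm x" by (simp add: mult_ac)
  then show "inner x (adjoint K h) \<le> C * norm h * norm x"
    using adjoint_works[OF assms(1)] by (simp add: inner_commute)
qed

lemma G_deriv:
  fixes phi :: "real \<Rightarrow> real"
  assumes cont: "continuous_on {-tau..} phi" and u: "u > -tau"
  shows "((\<lambda>u. integral {-tau..u} phi) has_real_derivative phi u) (at u)"
proof -
  have c: "continuous_on {-tau..u+1} phi" using continuous_on_subset[OF cont] by auto
  have "((\<lambda>u. integral {-tau..u} phi) has_vector_derivative phi u) (at u within {-tau..u+1})"
    by (rule integral_has_vector_derivative[OF c]) (use u in auto)
  moreover have "at u within {-tau..u+1} = at u"
    by (rule at_within_interior) (use u in auto)
  ultimately show ?thesis by (simp add: has_real_derivative_iff_has_vector_derivative)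
qed

lemma G_cont:
  fixes phi :: "real \<Rightarrow> real"
  assumes cont: "continuous_on {-tau..} phi"
  shows "continuous_on {-tau..b} (\<lambda>u. integral {-tau..u} phi)"
proof -
  have c: "continuous_on {-tau..b} phi" using continuous_on_subset[OF cont] by auto
  show ?thesis unfolding continuous_on_eq_continuous_within
    using has_vector_derivative_continuous[OF integral_has_vector_derivative[OF c]] by blast
qed

lemma int_term_eq:
  fixes phi :: "real \<Rightarrow> real"
  assumes cont: "continuous_on {-tau..} phi" and d: "0 \<le> d" "d \<le> tau" and r: "r \<ge> 0"
  shows "integral {-d..0} (\<lambda>s. phi (r + s)) = integral {-tau..r} phi - integral {-tau..r-d} phi"
proof -
  have "integral {-d..0} (\<lambda>s. phi (r + s)) = integral {r-d..r} phi"
  proof -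
    have "integral {(r-d)-r..r-r} (\<lambda>x. phi (x + r)) = integral {r-d..r} phi"
      using integral_shift_cbox[where f=phi and a="r-d" and b=r and c=r] by simp
    then show ?thesis by (simp add: add.commute)
  qed
  moreover have "integral {-tau..r-d} phi + integral {r-d..r} phi = integral {-tau..r} phi"
    by (rule Henstock_Kurzweil_Integration.integral_combine) (use d r in \<open>auto intro!: integrable_continuous_interval continuous_on_subset[OF cont]\<close>)
  ultimately show ?thesis by linarith
qed

lemma int_term_deriv:
  fixes phi :: "real \<Rightarrow> real"
  assumes cont: "continuous_on {-tau..} phi" and d: "0 \<le> d" "d \<le> tau" and t: "t > 0"
  shows "((\<lambda>r. integral {-d..0} (\<lambda>s. phi (r + s))) has_real_derivative phi t - phi (t - d)) (at t)"
proof -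
  let ?G = "\<lambda>u. integral {-tau..u} phi"
  have g1: "(?G has_real_derivative phi t) (at t)" by (rule G_deriv[OF cont]) (use t d in auto)
  have "(?G has_real_derivative phi (t - d)) (at (t + - d))" using G_deriv[OF cont, of "t - d"] t d by simp
  then have g2: "((\<lambda>r. ?G (r + - d)) has_real_derivative phi (t - d)) (at t)"
    by (rule DERIV_shift[THEN iffD1])
  have "((\<lambda>r. ?G r - ?G (r + - d)) has_real_derivative phi t - phi (t - d)) (at t)"
    by (rule DERIV_diff[OF g1 g2])
  then show ?thesis
    by (rule has_field_derivative_transform_within_open[where S="{0<..}"])
       (use t int_term_eq[OF cont d] in auto)
qed

lemma int_term_cont:
  fixes phi :: "real \<Rightarrow> real"
  assumes cont: "continuous_on {-tau..} phi" and d: "0 \<le> d" "d \<le> tau"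
  shows "continuous_on {0..b} (\<lambda>r. integral {-d..0} (\<lambda>s. phi (r + s)))"
proof -
  let ?G = "\<lambda>u. integral {-tau..u} phi"
  have c1: "continuous_on {0..b} ?G" using continuous_on_subset[OF G_cont[OF cont, of b]] d by auto
  have c2: "continuous_on {0..b} (\<lambda>r. ?G (r - d))"
    apply (rule continuous_on_compose2[OF G_cont[OF cont, of "b - d"]])
    using d by (auto intro!: continuous_intros)
  have "continuous_on {0..b} (\<lambda>r. ?G r - ?G (r - d))" by (intro continuous_on_diff c1 c2)
  then show ?thesis
    by (rule continuous_on_cong[THEN iffD1, rotated 2]) (use int_term_eq[OF cont d] in auto)
qed

lemma int_term_nonneg:
  fixes phi :: "real \<Rightarrow> real"
  assumes cont: "continuous_on {-tau..} phi" and d: "0 \<le> d" "d \<le> tau" and r: "r \<ge> 0"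
    and nn: "\<And>x. 0 \<le> phi x"
  shows "0 \<le> integral {-d..0} (\<lambda>s. phi (r + s))"
proof -
  have "continuous_on {-d..0} (\<lambda>s. phi (r + s))"
    by (rule continuous_on_compose2[OF cont]) (use d r in \<open>auto intro!: continuous_intros\<close>)
  then show ?thesis by (intro integral_nonneg integrable_continuous_interval nn)
qed

lemma vec_deriv_lip:
  fixes f :: "real \<Rightarrow> 'a::real_normed_vector"
  assumes d: "\<And>x. x \<ge> 0 \<Longrightarrow> (f has_vector_derivative f' x) (at x within {0..})"
    and b: "\<And>x. x \<ge> 0 \<Longrightarrow> norm (f' x) \<le> B"
    and st: "s \<ge> 0" "t \<ge> 0"
  shows "norm (f s - f t) \<le> B * \<bar>s - t\<bar>"
proof -
  have "norm (f s - f t) \<le> B * norm (s - t)"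
  proof (rule differentiable_bound[where S="{0..}" and f'="\<lambda>x h. h *\<^sub>R f' x"])
    show "convex {0::real..}" by (rule convex_real_interval)
    fix x :: real assume x: "x \<in> {0..}"
    show "(f has_derivative (\<lambda>h. h *\<^sub>R f' x)) (at x within {0..})"
      using d[of x] x by (simp add: has_vector_derivative_def)
    have "onorm (\<lambda>h::real. h *\<^sub>R f' x) = onorm (\<lambda>h::real. h) * norm (f' x)"
      by (rule onorm_scaleR_left) (rule bounded_linear_ident)
    also have "\<dots> = norm (f' x)" by (simp add: onorm_id)
    finally show "onorm (\<lambda>h. h *\<^sub>R f' x) \<le> B" using b[of x] x by simp
  qed (use st in auto)
  then show ?thesis by simp
qed

lemma norm3_sq: "(norm ((a, b, c) - (d, e, f)))\<^sup>2 = (norm (a - d))\<^sup>2 + (norm (b - e))\<^sup>2 + (norm (c - f))\<^sup>2"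
  by (simp add: norm_Pair)

lemma norm3_le: "norm ((a, b, c) - (d, e, f)) \<le> norm (a - d) + norm (b - e) + norm (c - f)"
proof -
  have "norm ((a, b, c) - (d, e, f)) = norm (a - d, b - e, c - f)" by simp
  also have "\<dots> \<le> norm (a - d) + norm (b - e, c - f)" by (rule norm_Pair_le)
  also have "norm (b - e, c - f) \<le> norm (b - e) + norm (c - f)" by (rule norm_Pair_le)
  finally show ?thesis by simp
qed

locale lksys =
  fixes aL :: "'l::euclidean_space \<Rightarrow> 'l" and aR :: "'r::euclidean_space \<Rightarrow> 'r"
    and aP :: "'p::euclidean_space \<Rightarrow> 'p" and K :: "'r \<Rightarrow> 'l"
    and tauRL tauLR C muL muR muP :: real and Hs :: 'l and Xs :: 'r and Ps :: 'p
    and H :: "real \<Rightarrow> 'l" and X :: "real \<Rightarrow> 'r" and P :: "real \<Rightarrow> 'p"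
  assumes lin: "linear K" and onK: "onorm K \<le> C"
    and d1: "tauRL \<ge> 0" and d2: "tauLR \<ge> 0"
    and m1: "muL > 0" and m2: "muR > 0" and m3: "muP > 0"
    and dissL: "one_sided_dissipative aL muL"
    and dissR: "one_sided_dissipative aR muR"
    and dissP: "one_sided_dissipative aP muP"
    and equil: "is_equilibrium aL aR aP K Hs Xs Ps"
    and sol: "is_solution aL aR aP K tauRL tauLR H X P"
begin

definition "V r = LKV C muL muR tauRL tauLR (\<lambda>s. H (r + s) - Hs) (\<lambda>s. X (r + s) - Xs) (\<lambda>s. P (r + s) - Ps)"
definition "N s = (norm (H s - Hs))\<^sup>2 + (norm (X s - Xs))\<^sup>2 + (norm (P s - Ps))\<^sup>2"
definition "phiH u = (norm (H u - Hs))\<^sup>2"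
definition "phiX u = (norm (X u - Xs))\<^sup>2"

lemma C_nonneg: "0 \<le> C" using Kop_bound(2)[OF lin onK] .

lemma V_eq: "V r = (norm (H r - Hs))\<^sup>2 / 2 + (norm (X r - Xs))\<^sup>2 / 2 + (norm (P r - Ps))\<^sup>2 / 2
     + C\<^sup>2 / (2 * muL) * integral {-tauRL..0} (\<lambda>s. phiX (r + s))
     + C\<^sup>2 / (2 * muR) * integral {-tauLR..0} (\<lambda>s. phiH (r + s))"
  unfolding V_def LKV_def phiX_def phiH_def by simp

lemma contH: "continuous_on {-max tauRL tauLR..} H"
  and contX: "continuous_on {-max tauRL tauLR..} X"
  and contP: "continuous_on {-max tauRL tauLR..} P"
  using sol unfolding is_solution_def Let_def by auto

lemma derivs:
  assumes "t \<ge> 0"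
  shows "(H has_vector_derivative (aL (H t) + K (X (t - tauRL)))) (at t within {0..})"
    "(X has_vector_derivative (aR (X t) + adjoint K (H (t - tauLR)))) (at t within {0..})"
    "(P has_vector_derivative (aP (P t))) (at t within {0..})"
  using sol assms unfolding is_solution_def Let_def by auto

lemma derivs_at:
  assumes "t > 0"
  shows "(H has_vector_derivative (aL (H t) + K (X (t - tauRL)))) (at t)"
    "(X has_vector_derivative (aR (X t) + adjoint K (H (t - tauLR)))) (at t)"
    "(P has_vector_derivative (aP (P t))) (at t)"
proof -
  have e: "at t within {0..} = at t" by (rule at_within_interior) (use assms in simp)
  show "(H has_vector_derivative (aL (H t) + K (X (t - tauRL)))) (at t)"
    "(X has_vector_derivative (aR (X t) + adjoint K (H (t - tauLR)))) (at t)"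
    "(P has_vector_derivative (aP (P t))) (at t)"
    using derivs[of t] assms e by auto
qed

lemma contphiH: "continuous_on {-max tauRL tauLR..} phiH"
  unfolding phiH_def by (intro continuous_intros contH)
lemma contphiX: "continuous_on {-max tauRL tauLR..} phiX"
  unfolding phiX_def by (intro continuous_intros contX)

lemma V_deriv:
  assumes t: "t > 0"
  shows "\<exists>D. (V has_real_derivative D) (at t) \<and>
     D \<le> - (muL / 2 - C\<^sup>2 / (2 * muR)) * (norm (H t - Hs))\<^sup>2 - (muR / 2 - C\<^sup>2 / (2 * muL)) * (norm (X t - Xs))\<^sup>2
          - muP * (norm (P t - Ps))\<^sup>2"
proof -
  define vH where "vH = aL (H t) + K (X (t - tauRL))"
  define vX where "vX = aR (X t) + adjoint K (H (t - tauLR))"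
  define vP where "vP = aP (P t)"
  define h where "h = H t - Hs"
  define x where "x = X t - Xs"
  define p where "p = P t - Ps"
  define hd where "hd = H (t - tauLR) - Hs"
  define xd where "xd = X (t - tauRL) - Xs"
  define a where "a = C\<^sup>2 / (2 * muL)"
  define b where "b = C\<^sup>2 / (2 * muR)"
  have dh: "((\<lambda>r. H r - Hs) has_vector_derivative vH) (at t)"
    using has_vector_derivative_diff[OF derivs_at(1)[OF t] has_vector_derivative_const[of Hs]] by (simp add: vH_def)
  have dx: "((\<lambda>r. X r - Xs) has_vector_derivative vX) (at t)"
    using has_vector_derivative_diff[OF derivs_at(2)[OF t] has_vector_derivative_const[of Xs]] by (simp add: vX_def)
  have dp: "((\<lambda>r. P r - Ps) has_vector_derivative vP) (at t)"
    using has_vector_derivative_diff[OF derivs_at(3)[OF t] has_vector_derivative_const[of Ps]] by (simp add: vP_def)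
  have i1: "((\<lambda>r. integral {-tauRL..0} (\<lambda>s. phiX (r + s))) has_real_derivative phiX t - phiX (t - tauRL)) (at t)"
    by (rule int_term_deriv[OF contphiX]) (use d1 d2 t in auto)
  have i2: "((\<lambda>r. integral {-tauLR..0} (\<lambda>s. phiH (r + s))) has_real_derivative phiH t - phiH (t - tauLR)) (at t)"
    by (rule int_term_deriv[OF contphiH]) (use d1 d2 t in auto)
  define D where "D = 2 * inner h vH / 2 + 2 * inner x vX / 2 + 2 * inner p vP / 2
     + a * (phiX t - phiX (t - tauRL)) + b * (phiH t - phiH (t - tauLR))"
  have "(V has_real_derivative D) (at t)"
    unfolding V_eq[abs_def] D_def a_def b_def h_def x_def p_def
    by (intro DERIV_add DERIV_cmult DERIV_cdivide normsq_deriv dh dx dp i1 i2)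
  moreover have "D \<le> - (muL / 2 - b) * (norm h)\<^sup>2 - (muR / 2 - a) * (norm x)\<^sup>2 - muP * (norm p)\<^sup>2"
  proof -
    have eqL: "aL Hs + K Xs = 0" and eqR: "aR Xs + adjoint K Hs = 0" and eqP: "aP Ps = 0"
      using equil unfolding is_equilibrium_def by auto
    have linA: "linear (adjoint K)" by (rule adjoint_linear[OF lin])
    have vH': "vH = (aL (H t) - aL Hs) + K xd"
      using eqL linear_diff[OF lin, of "X (t - tauRL)" Xs] unfolding vH_def xd_def
      by (simp add: algebra_simps eq_neg_iff_add_eq_0[symmetric])
    have vX': "vX = (aR (X t) - aR Xs) + adjoint K hd"
      using eqR linear_diff[OF linA, of "H (t - tauLR)" Hs] unfolding vX_def hd_def
      by (simp add: algebra_simps eq_neg_iff_add_eq_0[symmetric])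
    have vP': "vP = aP (P t) - aP Ps" using eqP vP_def by simp
    have sL: "inner h (aL (H t) - aL Hs) \<le> - muL * (norm h)\<^sup>2"
      using dissL unfolding one_sided_dissipative_def h_def by (simp add: inner_commute)
    have sR: "inner x (aR (X t) - aR Xs) \<le> - muR * (norm x)\<^sup>2"
      using dissR unfolding one_sided_dissipative_def x_def by (simp add: inner_commute)
    have sP: "inner p (aP (P t) - aP Ps) \<le> - muP * (norm p)\<^sup>2"
      using dissP unfolding one_sided_dissipative_def p_def by (simp add: inner_commute)
    have cL: "inner h (K xd) \<le> muL / 2 * (norm h)\<^sup>2 + a * (norm xd)\<^sup>2"
    proof -
      have "inner h (K xd) \<le> C * norm h * norm xd" by (rule K_inner(1)[OF lin onK])
      also have "\<dots> = norm h * (C * norm xd)" by simp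
      also have "\<dots> \<le> muL / 2 * (norm h)\<^sup>2 + (C * norm xd)\<^sup>2 / (2 * muL)" by (rule young[OF m1])
      also have "\<dots> = muL / 2 * (norm h)\<^sup>2 + a * (norm xd)\<^sup>2" by (simp add: a_def power_mult_distrib)
      finally show ?thesis .
    qed
    have cR: "inner x (adjoint K hd) \<le> muR / 2 * (norm x)\<^sup>2 + b * (norm hd)\<^sup>2"
    proof -
      have "inner x (adjoint K hd) \<le> C * norm hd * norm x" by (rule K_inner(2)[OF lin onK])
      also have "\<dots> = norm x * (C * norm hd)" by simp
      also have "\<dots> \<le> muR / 2 * (norm x)\<^sup>2 + (C * norm hd)\<^sup>2 / (2 * muR)" by (rule young[OF m2])
      also have "\<dots> = muR / 2 * (norm x)\<^sup>2 + b * (norm hd)\<^sup>2" by (simp add: b_def power_mult_distrib)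
      finally show ?thesis .
    qed
    have ph: "phiX t = (norm x)\<^sup>2" "phiX (t - tauRL) = (norm xd)\<^sup>2"
      "phiH t = (norm h)\<^sup>2" "phiH (t - tauLR) = (norm hd)\<^sup>2"
      unfolding phiX_def phiH_def x_def xd_def h_def hd_def by auto
    have "D = inner h (aL (H t) - aL Hs) + inner h (K xd) + inner x (aR (X t) - aR Xs) + inner x (adjoint K hd)
        + inner p (aP (P t) - aP Ps) + a * ((norm x)\<^sup>2 - (norm xd)\<^sup>2) + b * ((norm h)\<^sup>2 - (norm hd)\<^sup>2)"
      unfolding D_def vH' vX' vP' ph by (simp add: inner_add_right add_divide_distrib)
    with sL sR sP cL cR show ?thesis by (simp add: algebra_simps)
  qed
  ultimately show ?thesis unfolding a_def b_def h_def x_def p_def by blast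
qed


lemma alphas: assumes "C\<^sup>2 < muL * muR"
  shows "0 < muL / 2 - C\<^sup>2 / (2 * muR)" "0 < muR / 2 - C\<^sup>2 / (2 * muL)"
  using assms m1 m2 by (simp_all add: field_simps)

lemma V_cont: "continuous_on {0..b} V"
proof -
  have cH: "continuous_on {0..b} H" by (rule continuous_on_subset[OF contH]) (use d1 d2 in auto)
  have cX: "continuous_on {0..b} X" by (rule continuous_on_subset[OF contX]) (use d1 d2 in auto)
  have cP: "continuous_on {0..b} P" by (rule continuous_on_subset[OF contP]) (use d1 d2 in auto)
  have i1: "continuous_on {0..b} (\<lambda>r. integral {-tauRL..0} (\<lambda>s. phiX (r + s)))"
    by (rule int_term_cont[OF contphiX]) (use d1 d2 in auto)
  have i2: "continuous_on {0..b} (\<lambda>r. integral {-tauLR..0} (\<lambda>s. phiH (r + s)))"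
    by (rule int_term_cont[OF contphiH]) (use d1 d2 in auto)
  show ?thesis unfolding V_eq[abs_def]
    by (intro continuous_intros cH cX cP i1 i2) auto
qed

lemma N_nonneg: "0 \<le> N s" unfolding N_def by simp

lemma V_ge: assumes "r \<ge> 0" shows "N r / 2 \<le> V r"
proof -
  have "0 \<le> integral {-tauRL..0} (\<lambda>s. phiX (r + s))"
    by (rule int_term_nonneg[OF contphiX]) (use d1 d2 assms in \<open>auto simp: phiX_def\<close>)
  moreover have "0 \<le> integral {-tauLR..0} (\<lambda>s. phiH (r + s))"
    by (rule int_term_nonneg[OF contphiH]) (use d1 d2 assms in \<open>auto simp: phiH_def\<close>)
  moreover have "0 \<le> C\<^sup>2 / (2 * muL)" "0 \<le> C\<^sup>2 / (2 * muR)" using m1 m2 by auto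
  ultimately have "0 \<le> C\<^sup>2 / (2 * muL) * integral {-tauRL..0} (\<lambda>s. phiX (r + s))"
    "0 \<le> C\<^sup>2 / (2 * muR) * integral {-tauLR..0} (\<lambda>s. phiH (r + s))"
    by (simp_all only: mult_nonneg_nonneg)
  then show ?thesis unfolding V_eq N_def add_divide_distrib by linarith
qed

lemma V_drop:
  assumes sg: "C\<^sup>2 < muL * muR" and t: "0 \<le> t1" "t1 \<le> t2"
    and e: "\<And>s. s \<in> {t1..t2} \<Longrightarrow> e \<le> N s"
  shows "V t2 + min (muL / 2 - C\<^sup>2 / (2 * muR)) (min (muR / 2 - C\<^sup>2 / (2 * muL)) muP) * e * (t2 - t1) \<le> V t1"
proof -
  define c where "c = min (muL / 2 - C\<^sup>2 / (2 * muR)) (min (muR / 2 - C\<^sup>2 / (2 * muL)) muP)"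
  have c0: "0 \<le> c" using alphas[OF sg] m3 unfolding c_def by simp
  define W where "W r = V r + c * e * r" for r
  have "W t2 \<le> W t1"
  proof (rule DERIV_nonpos_imp_decreasing_open[OF t(2)])
    fix x assume x: "t1 < x" "x < t2"
    then have x0: "x > 0" using t by linarith
    obtain D where D: "(V has_real_derivative D) (at x)"
      "D \<le> - (muL / 2 - C\<^sup>2 / (2 * muR)) * (norm (H x - Hs))\<^sup>2 - (muR / 2 - C\<^sup>2 / (2 * muL)) * (norm (X x - Xs))\<^sup>2
          - muP * (norm (P x - Ps))\<^sup>2"
      using V_deriv[OF x0] by blast
    have "(W has_real_derivative D + c * e * 1) (at x)"
      unfolding W_def[abs_def] by (intro DERIV_add D(1) DERIV_cmult DERIV_ident)
    moreover have "D + c * e * 1 \<le> 0"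
    proof -
      have a1: "c * (norm (H x - Hs))\<^sup>2 \<le> (muL / 2 - C\<^sup>2 / (2 * muR)) * (norm (H x - Hs))\<^sup>2"
        by (rule mult_right_mono) (auto simp: c_def)
      have a2: "c * (norm (X x - Xs))\<^sup>2 \<le> (muR / 2 - C\<^sup>2 / (2 * muL)) * (norm (X x - Xs))\<^sup>2"
        by (rule mult_right_mono) (auto simp: c_def)
      have a3: "c * (norm (P x - Ps))\<^sup>2 \<le> muP * (norm (P x - Ps))\<^sup>2"
        by (rule mult_right_mono) (auto simp: c_def)
      have "c * e \<le> c * N x" using e[of x] x c0 by (intro mult_left_mono) auto
      moreover have "c * N x = c * (norm (H x - Hs))\<^sup>2 + c * (norm (X x - Xs))\<^sup>2 + c * (norm (P x - Ps))\<^sup>2"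
        unfolding N_def by (simp add: algebra_simps)
      ultimately show ?thesis using D(2) a1 a2 a3 by linarith
    qed
    ultimately show "\<exists>y. (W has_real_derivative y) (at x) \<and> y \<le> 0" by blast
  next
    have "continuous_on {t1..t2} V" by (rule continuous_on_subset[OF V_cont[of t2]]) (use t in auto)
    then show "continuous_on {t1..t2} W" unfolding W_def[abs_def] by (intro continuous_intros)
  qed
  then show ?thesis unfolding W_def c_def by (simp add: algebra_simps)
qed

lemma V_mono: assumes sg: "C\<^sup>2 < muL * muR" and t: "0 \<le> t1" "t1 \<le> t2" shows "V t2 \<le> V t1"
  using V_drop[OF sg t, of 0] N_nonneg by simp

lemma stab_bound:
  assumes sg: "C\<^sup>2 < muL * muR" and hist: "\<And>s. s \<in> {-max tauRL tauLR..0} \<Longrightarrow> N s < del\<^sup>2"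
    and t: "t \<ge> 0"
  shows "N t < (1 + 2 * (C\<^sup>2 / (2 * muL)) * tauRL + 2 * (C\<^sup>2 / (2 * muR)) * tauLR) * del\<^sup>2"
proof -
  have I1: "integral {-tauRL..0} (\<lambda>s. phiX (0 + s)) \<le> tauRL * del\<^sup>2"
  proof -
    have "integral {-tauRL..0} phiX \<le> integral {-tauRL..0} (\<lambda>s. del\<^sup>2)"
    proof (rule integral_le)
      show "phiX integrable_on {-tauRL..0}"
        by (intro integrable_continuous_interval continuous_on_subset[OF contphiX]) auto
      fix s assume "s \<in> {-tauRL..0}"
      then have "N s < del\<^sup>2" by (intro hist) auto
      then show "phiX s \<le> del\<^sup>2" unfolding N_def phiX_def
        using zero_le_power2[of "norm (H s - Hs)"] zero_le_power2[of "norm (P s - Ps)"] by linarith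
    qed auto
    then show ?thesis using d1 by simp
  qed
  have I2: "integral {-tauLR..0} (\<lambda>s. phiH (0 + s)) \<le> tauLR * del\<^sup>2"
  proof -
    have "integral {-tauLR..0} phiH \<le> integral {-tauLR..0} (\<lambda>s. del\<^sup>2)"
    proof (rule integral_le)
      show "phiH integrable_on {-tauLR..0}"
        by (intro integrable_continuous_interval continuous_on_subset[OF contphiH]) auto
      fix s assume "s \<in> {-tauLR..0}"
      then have "N s < del\<^sup>2" by (intro hist) auto
      then show "phiH s \<le> del\<^sup>2" unfolding N_def phiH_def
        using zero_le_power2[of "norm (X s - Xs)"] zero_le_power2[of "norm (P s - Ps)"] by linarith
    qed auto
    then show ?thesis using d2 by simp
  qed
  have N0: "N 0 < del\<^sup>2" using hist[of 0] d1 d2 by simp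
  have ca: "0 \<le> C\<^sup>2 / (2 * muL)" "0 \<le> C\<^sup>2 / (2 * muR)" using m1 m2 by auto
  have "V 0 = N 0 / 2 + C\<^sup>2 / (2 * muL) * integral {-tauRL..0} (\<lambda>s. phiX (0 + s))
     + C\<^sup>2 / (2 * muR) * integral {-tauLR..0} (\<lambda>s. phiH (0 + s))"
    unfolding V_eq N_def by (simp add: add_divide_distrib)
  also have "\<dots> \<le> N 0 / 2 + C\<^sup>2 / (2 * muL) * (tauRL * del\<^sup>2) + C\<^sup>2 / (2 * muR) * (tauLR * del\<^sup>2)"
    using mult_left_mono[OF I1 ca(1)] mult_left_mono[OF I2 ca(2)] by linarith
  finally have "V 0 \<le> \<dots>" .
  moreover have "N t / 2 \<le> V t" by (rule V_ge[OF t])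
  moreover have "V t \<le> V 0" by (rule V_mono[OF sg]) (use t in auto)
  moreover have "(1 + 2 * (C\<^sup>2 / (2 * muL)) * tauRL + 2 * (C\<^sup>2 / (2 * muR)) * tauLR) * del\<^sup>2
     = del\<^sup>2 + 2 * (C\<^sup>2 / (2 * muL) * (tauRL * del\<^sup>2)) + 2 * (C\<^sup>2 / (2 * muR) * (tauLR * del\<^sup>2))"
    by (simp add: algebra_simps)
  ultimately show ?thesis using N0 by linarith
qed


lemma attract:
  assumes sg: "C\<^sup>2 < muL * muR"
    and lip: "\<And>s t. 0 \<le> s \<Longrightarrow> 0 \<le> t \<Longrightarrow> norm ((H s, X s, P s) - (H t, X t, P t)) \<le> Lz * \<bar>s - t\<bar>"
  shows "((\<lambda>t. (H t, X t, P t)) \<longlongrightarrow> (Hs, Xs, Ps)) at_top"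
proof (rule tendstoI)
  fix e :: real assume e: "e > 0"
  define c where "c = min (muL / 2 - C\<^sup>2 / (2 * muR)) (min (muR / 2 - C\<^sup>2 / (2 * muL)) muP)"
  have c0: "0 < c" using alphas[OF sg] m3 unfolding c_def by simp
  define L1 where "L1 = max Lz 0 + 1"
  have L1: "L1 > 0" "Lz \<le> L1" unfolding L1_def by auto
  define del where "del = e / (2 * L1)"
  have del: "del > 0" using e L1 by (simp add: del_def)
  define kap where "kap = c * (e / 2)\<^sup>2 * del"
  have kap: "kap > 0" using c0 e del by (simp add: kap_def)
  define Vi where "Vi = Inf (V ` {0..})"
  have bdd: "bdd_below (V ` {0..})"
  proof (rule bdd_belowI[of _ 0])
    fix x assume "x \<in> V ` {0..}"
    then obtain r where r: "r \<ge> 0" "x = V r" by auto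
    show "0 \<le> x" using V_ge[OF r(1)] N_nonneg[of r] r(2) by linarith
  qed
  have "Vi < Vi + kap" using kap by simp
  then obtain t0 where t0: "t0 \<ge> 0" "V t0 < Vi + kap"
    using cInf_lessD[of "V ` {0..}" "Vi + kap"] unfolding Vi_def by auto
  have "\<forall>t\<ge>t0. dist (H t, X t, P t) (Hs, Xs, Ps) < e"
  proof (intro allI impI)
    fix t assume tt: "t \<ge> t0"
    then have t0': "t \<ge> 0" using t0 by linarith
    show "dist (H t, X t, P t) (Hs, Xs, Ps) < e"
    proof (rule ccontr)
      assume "\<not> ?thesis"
      then have big: "e \<le> norm ((H t, X t, P t) - (Hs, Xs, Ps))" by (simp add: dist_norm)
      have "V (t + del) + c * (e / 2)\<^sup>2 * (t + del - t) \<le> V t"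
        unfolding c_def
      proof (rule V_drop[OF sg t0'])
        show "t \<le> t + del" using del by simp
        fix s assume s: "s \<in> {t..t + del}"
        have "norm ((H s, X s, P s) - (H t, X t, P t)) \<le> Lz * \<bar>s - t\<bar>" using s t0' by (intro lip) auto
        also have "\<dots> \<le> L1 * del" using s L1 by (intro mult_mono) auto
        also have "\<dots> = e / 2" using L1 by (simp add: del_def)
        finally have "norm ((H s, X s, P s) - (H t, X t, P t)) \<le> e / 2" .
        moreover have "norm ((H t, X t, P t) - (Hs, Xs, Ps)) \<le> norm ((H s, X s, P s) - (Hs, Xs, Ps)) + norm ((H s, X s, P s) - (H t, X t, P t))"
        proof -
          have "(H t, X t, P t) - (Hs, Xs, Ps) = ((H s, X s, P s) - (Hs, Xs, Ps)) - ((H s, X s, P s) - (H t, X t, P t))"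
            by simp
          then show ?thesis by (metis norm_triangle_ineq4)
        qed
        ultimately have "e / 2 \<le> norm ((H s, X s, P s) - (Hs, Xs, Ps))" using big by linarith
        then have "(e / 2)\<^sup>2 \<le> (norm ((H s, X s, P s) - (Hs, Xs, Ps)))\<^sup>2"
          using e by (intro power_mono) auto
        then show "(e / 2)\<^sup>2 \<le> N s" unfolding N_def norm3_sq .
      qed
      then have "V (t + del) + kap \<le> V t" by (simp add: kap_def)
      moreover have "V t \<le> V t0" by (rule V_mono[OF sg t0(1) tt])
      moreover have "Vi \<le> V (t + del)" unfolding Vi_def
        by (rule cInf_lower[OF _ bdd]) (use t0' del in auto)
      ultimately show False using t0(2) by linarith
    qed
  qed
  then show "\<forall>\<^sub>F t in at_top. dist (H t, X t, P t) (Hs, Xs, Ps) < e"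
    unfolding eventually_at_top_linorder by blast
qed

end

lemma adj_bound:
  fixes K :: "'r::euclidean_space \<Rightarrow> 'l::euclidean_space"
  assumes "linear K" "onorm K \<le> C"
  shows "norm (adjoint K h) \<le> C * norm h"
proof (cases "adjoint K h = 0")
  case True then show ?thesis using Kop_bound(2)[OF assms] by simp
next
  case False
  have "(norm (adjoint K h))\<^sup>2 \<le> C * norm h * norm (adjoint K h)"
    using K_inner(2)[OF assms, of "adjoint K h" h] by (simp add: power2_norm_eq_inner)
  then have "norm (adjoint K h) * norm (adjoint K h) \<le> (C * norm h) * norm (adjoint K h)"
    by (simp add: power2_eq_square)
  then show ?thesis using False by simp
qed

lemma lip_bound:
  fixes f :: "'a::metric_space \<Rightarrow> 'b::real_normed_vector"
  assumes "L-lipschitz_on UNIV f" "y \<in> cball c r"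
  shows "norm (f y) \<le> norm (f c) + \<bar>L\<bar> * r"
proof -
  have "dist (f y) (f c) \<le> L * dist y c" using lipschitz_onD[OF assms(1)] by auto
  also have "\<dots> \<le> \<bar>L\<bar> * r"
  proof -
    have d: "dist y c \<le> r" using assms(2) by (simp add: dist_commute)
    have "L * dist y c \<le> \<bar>L\<bar> * dist y c" by (intro mult_right_mono) auto
    also have "\<dots> \<le> \<bar>L\<bar> * r" using d by (intro mult_left_mono) auto
    finally show ?thesis .
  qed
  finally have "dist (f y) (f c) \<le> \<bar>L\<bar> * r" .
  moreover have "norm (f y) \<le> norm (f c) + dist (f y) (f c)"
    by (metis dist_norm norm_triangle_sub add.commute)
  ultimately show ?thesis by linarith
qed

lemma cball_norm: "y \<in> cball c r \<Longrightarrow> norm y \<le> norm c + r"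
  by (metis add_le_cancel_left dist_norm mem_cball norm_minus_commute norm_triangle_sub order_trans)

lemma equil_unique:
  fixes aL :: "'l::euclidean_space \<Rightarrow> 'l" and aR :: "'r::euclidean_space \<Rightarrow> 'r"
    and aP :: "'p::euclidean_space \<Rightarrow> 'p" and K :: "'r \<Rightarrow> 'l"
  assumes lin: "linear K" and onK: "onorm K \<le> C"
    and m1: "muL > 0" and m2: "muR > 0" and m3: "muP > 0"
    and dissL: "one_sided_dissipative aL muL"
    and dissR: "one_sided_dissipative aR muR"
    and dissP: "one_sided_dissipative aP muP"
    and sg: "C\<^sup>2 < muL * muR"
    and e1: "is_equilibrium aL aR aP K Hs Xs Ps" and e2: "is_equilibrium aL aR aP K H' X' P'"
  shows "(H', X', P') = (Hs, Xs, Ps)"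
proof -
  define h where "h = H' - Hs"
  define x where "x = X' - Xs"
  define p where "p = P' - Ps"
  have linA: "linear (adjoint K)" by (rule adjoint_linear[OF lin])
  have eL: "aL H' - aL Hs = - K x" using e1 e2 linear_diff[OF lin, of X' Xs]
    unfolding is_equilibrium_def x_def by (simp add: eq_neg_iff_add_eq_0[symmetric])
  have eR: "aR X' - aR Xs = - adjoint K h" using e1 e2 linear_diff[OF linA, of H' Hs]
    unfolding is_equilibrium_def h_def by (simp add: eq_neg_iff_add_eq_0[symmetric])
  have eP: "aP P' - aP Ps = 0" using e1 e2 unfolding is_equilibrium_def by simp
  have iL: "muL * (norm h)\<^sup>2 \<le> C * norm h * norm x"
  proof -
    have "inner (aL H' - aL Hs) h \<le> - muL * (norm h)\<^sup>2"
      using dissL unfolding one_sided_dissipative_def h_def by blast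
    then have "muL * (norm h)\<^sup>2 \<le> inner h (K x)" using eL by (simp add: inner_commute)
    also have "\<dots> \<le> C * norm h * norm x" by (rule K_inner(1)[OF lin onK])
    finally show ?thesis .
  qed
  have iR: "muR * (norm x)\<^sup>2 \<le> C * norm h * norm x"
  proof -
    have "inner (aR X' - aR Xs) x \<le> - muR * (norm x)\<^sup>2"
      using dissR unfolding one_sided_dissipative_def x_def by blast
    then have "muR * (norm x)\<^sup>2 \<le> inner x (adjoint K h)" using eR by (simp add: inner_commute)
    also have "\<dots> \<le> C * norm h * norm x" by (rule K_inner(2)[OF lin onK])
    finally show ?thesis .
  qed
  have C0: "0 \<le> C" by (rule Kop_bound(2)[OF lin onK])
  have hx: "h = 0 \<and> x = 0"
  proof (cases "h = 0 \<or> x = 0")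
    case True
    then show ?thesis
    proof
      assume "h = 0" then have "muR * (norm x)\<^sup>2 \<le> 0" using iR by simp
      then have "x = 0" using m2 by (simp add: mult_le_0_iff)
      with \<open>h = 0\<close> show ?thesis by simp
    next
      assume "x = 0" then have "muL * (norm h)\<^sup>2 \<le> 0" using iL by simp
      then have "h = 0" using m1 by (simp add: mult_le_0_iff)
      with \<open>x = 0\<close> show ?thesis by simp
    qed
  next
    case False
    then have nh: "norm h > 0" and nx: "norm x > 0" by auto
    have a: "muL * norm h \<le> C * norm x"
      using iL nh by (simp add: power2_eq_square)
    have b: "muR * norm x \<le> C * norm h"
      using iR nx by (simp add: power2_eq_square)
    have "(muL * norm h) * (muR * norm x) \<le> (C * norm x) * (C * norm h)"
      by (rule mult_mono[OF a b]) (use m2 nx C0 nh in auto)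
    then have "(muL * muR) * (norm h * norm x) \<le> C\<^sup>2 * (norm h * norm x)"
      by (simp add: power2_eq_square mult_ac)
    then have "muL * muR \<le> C\<^sup>2" using nh nx by simp
    with sg show ?thesis by simp
  qed
  have "inner (aP P' - aP Ps) p \<le> - muP * (norm p)\<^sup>2"
    using dissP unfolding one_sided_dissipative_def p_def by blast
  then have "muP * (norm p)\<^sup>2 \<le> 0" using eP by simp
  then have "p = 0" using m3 by (simp add: mult_le_0_iff)
  with hx show ?thesis unfolding h_def x_def p_def by simp
qed

theorem theorem3p6:
  fixes aL :: "real^'dL^'T \<Rightarrow> real^'dL^'T"
    and aR :: "real^'dR^'V \<Rightarrow> real^'dR^'V"
    and aP :: "real^'nP \<Rightarrow> real^'nP"
    and k :: "'T::finite \<Rightarrow> 'V::finite \<Rightarrow> real^'dR^'dL"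
    and tauRL tauLR CK muL muR muP rL rR rP :: real
    and cL Hs :: "real^'dL^'T" and cR Xs :: "real^'dR^'V" and cP Ps :: "real^'nP"
  defines "K \<equiv> kernel_op k"
    and "tau \<equiv> max tauRL tauLR"
    and "S \<equiv> cball cL rL \<times> cball cR rR \<times> cball cP rP"
    and "alphaL \<equiv> muL / 2 - CK\<^sup>2 / (2 * muR)"
    and "alphaR \<equiv> muR / 2 - CK\<^sup>2 / (2 * muL)"
  assumes delays: "tauRL \<ge> 0" "tauLR \<ge> 0"
    and K_bound: "onorm K \<le> hs_norm k" "hs_norm k \<le> CK"
    and lipL: "\<exists>L. L-lipschitz_on UNIV aL"
    and lipR: "\<exists>L. L-lipschitz_on UNIV aR"
    and lipP: "\<exists>L. L-lipschitz_on UNIV aP"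
    and mu_pos: "muL > 0" "muR > 0" "muP > 0"
    and dissL: "one_sided_dissipative aL muL"
    and dissR: "one_sided_dissipative aR muR"
    and dissP: "one_sided_dissipative aP muP"
    and invariant: "\<And>H X P. is_solution aL aR aP K tauRL tauLR H X P \<Longrightarrow> history_in tau S H X P
                       \<Longrightarrow> \<forall>t\<ge>0. (H t, X t, P t) \<in> S"
    and equil: "is_equilibrium aL aR aP K Hs Xs Ps" "(Hs, Xs, Ps) \<in> S"
    and small_gain: "CK\<^sup>2 < muL * muR"
  shows
    \<comment> \<open>uniqueness of the equilibrium\<close>
    "(\<forall>H' X' P'. is_equilibrium aL aR aP K H' X' P' \<longrightarrow> (H', X', P') = (Hs, Xs, Ps))
     \<comment> \<open>Lyapunov stability\<close>
     \<and> (\<forall>\<epsilon>>0. \<exists>\<delta>>0. \<forall>H X P. is_solution aL aR aP K tauRL tauLR H X P \<and> history_in tau S H X P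
            \<and> (\<forall>s\<in>{-tau..0}. norm ((H s, X s, P s) - (Hs, Xs, Ps)) < \<delta>)
            \<longrightarrow> (\<forall>t\<ge>0. norm ((H t, X t, P t) - (Hs, Xs, Ps)) < \<epsilon>))
     \<comment> \<open>global attractivity\<close>
     \<and> (\<forall>H X P. is_solution aL aR aP K tauRL tauLR H X P \<and> history_in tau S H X P
            \<longrightarrow> ((\<lambda>t. (H t, X t, P t)) \<longlongrightarrow> (Hs, Xs, Ps)) at_top)
     \<comment> \<open>Lyapunov-Krasovskii estimate\<close>
     \<and> alphaL > 0 \<and> alphaR > 0
     \<and> (\<forall>H X P. is_solution aL aR aP K tauRL tauLR H X P \<and> history_in tau S H X P
            \<longrightarrow> (\<forall>t>0. \<exists>D.
                 ((\<lambda>r. LKV CK muL muR tauRL tauLR (\<lambda>s. H (r + s) - Hs) (\<lambda>s. X (r + s) - Xs)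
                        (\<lambda>s. P (r + s) - Ps)) has_real_derivative D) (at t)
                 \<and> D \<le> - alphaL * (norm (H t - Hs))\<^sup>2 - alphaR * (norm (X t - Xs))\<^sup>2
                        - muP * (norm (P t - Ps))\<^sup>2))"
proof -
  have lin: "linear K" unfolding K_def by (rule kernel_linear)
  have onK: "onorm K \<le> CK" using K_bound by linarith
  have CK0: "0 \<le> CK" by (rule Kop_bound(2)[OF lin onK])
  have alph: "alphaL > 0" "alphaR > 0" unfolding alphaL_def alphaR_def
    using small_gain mu_pos by (simp_all add: field_simps)
  have uniq: "\<forall>H' X' P'. is_equilibrium aL aR aP K H' X' P' \<longrightarrow> (H', X', P') = (Hs, Xs, Ps)"
    using equil_unique[OF lin onK mu_pos dissL dissR dissP small_gain equil(1)] by blast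
  have LK: "\<forall>H X P. is_solution aL aR aP K tauRL tauLR H X P \<and> history_in tau S H X P
            \<longrightarrow> (\<forall>t>0. \<exists>D.
                 ((\<lambda>r. LKV CK muL muR tauRL tauLR (\<lambda>s. H (r + s) - Hs) (\<lambda>s. X (r + s) - Xs)
                        (\<lambda>s. P (r + s) - Ps)) has_real_derivative D) (at t)
                 \<and> D \<le> - alphaL * (norm (H t - Hs))\<^sup>2 - alphaR * (norm (X t - Xs))\<^sup>2
                        - muP * (norm (P t - Ps))\<^sup>2)"
  proof (rule allI, rule allI, rule allI, rule impI)
    fix H X P assume a: "is_solution aL aR aP K tauRL tauLR H X P \<and> history_in tau S H X P"
    interpret lksys aL aR aP K tauRL tauLR CK muL muR muP Hs Xs Ps H X P
      using lin onK delays mu_pos dissL dissR dissP equil(1) a by (intro lksys.intro) auto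
    show "\<forall>t>0. \<exists>D.
                 ((\<lambda>r. LKV CK muL muR tauRL tauLR (\<lambda>s. H (r + s) - Hs) (\<lambda>s. X (r + s) - Xs)
                        (\<lambda>s. P (r + s) - Ps)) has_real_derivative D) (at t)
                 \<and> D \<le> - alphaL * (norm (H t - Hs))\<^sup>2 - alphaR * (norm (X t - Xs))\<^sup>2
                        - muP * (norm (P t - Ps))\<^sup>2"
    proof (intro allI impI)
      fix t :: real assume "t > 0"
      from V_deriv[OF this] show "\<exists>D.
                 ((\<lambda>r. LKV CK muL muR tauRL tauLR (\<lambda>s. H (r + s) - Hs) (\<lambda>s. X (r + s) - Xs)
                        (\<lambda>s. P (r + s) - Ps)) has_real_derivative D) (at t)
                 \<and> D \<le> - alphaL * (norm (H t - Hs))\<^sup>2 - alphaR * (norm (X t - Xs))\<^sup>2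
                        - muP * (norm (P t - Ps))\<^sup>2"
        unfolding V_def[abs_def] alphaL_def alphaR_def .
    qed
  qed
  have stab: "\<forall>\<epsilon>>0. \<exists>\<delta>>0. \<forall>H X P. is_solution aL aR aP K tauRL tauLR H X P \<and> history_in tau S H X P
            \<and> (\<forall>s\<in>{-tau..0}. norm ((H s, X s, P s) - (Hs, Xs, Ps)) < \<delta>)
            \<longrightarrow> (\<forall>t\<ge>0. norm ((H t, X t, P t) - (Hs, Xs, Ps)) < \<epsilon>)"
  proof (intro allI impI)
    fix eps :: real assume eps: "eps > 0"
    define M where "M = 1 + 2 * (CK\<^sup>2 / (2 * muL)) * tauRL + 2 * (CK\<^sup>2 / (2 * muR)) * tauLR"
    have "0 \<le> CK\<^sup>2 / (2 * muL) * tauRL" "0 \<le> CK\<^sup>2 / (2 * muR) * tauLR"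
      using mu_pos delays by simp_all
    then have M1: "M \<ge> 1" unfolding M_def by linarith
    define del where "del = eps / sqrt M"
    have del: "del > 0" using eps M1 by (simp add: del_def)
    have Mdel: "M * del\<^sup>2 = eps\<^sup>2" using M1 by (simp add: del_def power_divide)
    show "\<exists>\<delta>>0. \<forall>H X P. is_solution aL aR aP K tauRL tauLR H X P \<and> history_in tau S H X P
            \<and> (\<forall>s\<in>{-tau..0}. norm ((H s, X s, P s) - (Hs, Xs, Ps)) < \<delta>)
            \<longrightarrow> (\<forall>t\<ge>0. norm ((H t, X t, P t) - (Hs, Xs, Ps)) < eps)"
    proof (intro exI[of _ del] conjI allI impI del)
      fix H X P and t :: real
      assume a: "is_solution aL aR aP K tauRL tauLR H X P \<and> history_in tau S H X P
            \<and> (\<forall>s\<in>{-tau..0}. norm ((H s, X s, P s) - (Hs, Xs, Ps)) < del)"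
        and t: "0 \<le> t"
      interpret lksys aL aR aP K tauRL tauLR CK muL muR muP Hs Xs Ps H X P
        using lin onK delays mu_pos dissL dissR dissP equil(1) a by (intro lksys.intro) auto
      have hist: "N s < del\<^sup>2" if s: "s \<in> {-max tauRL tauLR..0}" for s
      proof -
        have "\<forall>s\<in>{-tau..0}. norm ((H s, X s, P s) - (Hs, Xs, Ps)) < del" using a by (elim conjE)
        then have "norm ((H s, X s, P s) - (Hs, Xs, Ps)) < del" using s unfolding tau_def by (elim ballE) auto
        then have "(norm ((H s, X s, P s) - (Hs, Xs, Ps)))\<^sup>2 < del\<^sup>2"
          by (intro power_strict_mono) auto
        then show ?thesis unfolding N_def norm3_sq .
      qed
      have "N t < M * del\<^sup>2" using stab_bound[OF small_gain hist t] unfolding M_def by blast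
      then have "N t < eps\<^sup>2" using Mdel by simp
      then have "(norm ((H t, X t, P t) - (Hs, Xs, Ps)))\<^sup>2 < eps\<^sup>2" unfolding norm3_sq N_def .
      then show "norm ((H t, X t, P t) - (Hs, Xs, Ps)) < eps"
        by (rule power2_less_imp_less) (use eps in auto)
    qed
  qed
  have att: "\<forall>H X P. is_solution aL aR aP K tauRL tauLR H X P \<and> history_in tau S H X P
            \<longrightarrow> ((\<lambda>t. (H t, X t, P t)) \<longlongrightarrow> (Hs, Xs, Ps)) at_top"
  proof (intro allI impI)
    fix H X P assume a: "is_solution aL aR aP K tauRL tauLR H X P \<and> history_in tau S H X P"
    interpret lksys aL aR aP K tauRL tauLR CK muL muR muP Hs Xs Ps H X P
      using lin onK delays mu_pos dissL dissR dissP equil(1) a by (intro lksys.intro) auto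
    have inS: "H s \<in> cball cL rL \<and> X s \<in> cball cR rR \<and> P s \<in> cball cP rP" if s: "s \<ge> -tau" for s
    proof (cases "s \<ge> 0")
      case True
      have "\<forall>t\<ge>0. (H t, X t, P t) \<in> S" using invariant[of H X P] a by blast
      then have "(H s, X s, P s) \<in> S" using True by blast
      then show ?thesis unfolding S_def by simp
    next
      case False
      then have "(H s, X s, P s) \<in> S" using a s unfolding history_in_def by auto
      then show ?thesis unfolding S_def by simp
    qed
    obtain LL where LL: "LL-lipschitz_on UNIV aL" using lipL by blast
    obtain LR where LR: "LR-lipschitz_on UNIV aR" using lipR by blast
    obtain LP where LP: "LP-lipschitz_on UNIV aP" using lipP by blast
    define BH where "BH = norm (aL cL) + \<bar>LL\<bar> * rL + CK * (norm cR + rR)"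
    define BX where "BX = norm (aR cR) + \<bar>LR\<bar> * rR + CK * (norm cL + rL)"
    define BP where "BP = norm (aP cP) + \<bar>LP\<bar> * rP"
    have tau0: "tauRL \<le> tau" "tauLR \<le> tau" unfolding tau_def by auto
    have bH: "norm (aL (H s) + K (X (s - tauRL))) \<le> BH" if s: "s \<ge> 0" for s
    proof -
      have i1: "H s \<in> cball cL rL" using inS[of s] s tau0 delays by auto
      have i2: "X (s - tauRL) \<in> cball cR rR" using inS[of "s - tauRL"] s tau0 by auto
      have "norm (aL (H s) + K (X (s - tauRL))) \<le> norm (aL (H s)) + norm (K (X (s - tauRL)))"
        by (rule norm_triangle_ineq)
      also have "norm (aL (H s)) \<le> norm (aL cL) + \<bar>LL\<bar> * rL" by (rule lip_bound[OF LL i1])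
      also have "norm (K (X (s - tauRL))) \<le> CK * norm (X (s - tauRL))" by (rule Kop_bound(1)[OF lin onK])
      also have "\<dots> \<le> CK * (norm cR + rR)" by (rule mult_left_mono[OF cball_norm[OF i2] CK0])
      finally show ?thesis unfolding BH_def by simp
    qed
    have bX: "norm (aR (X s) + adjoint K (H (s - tauLR))) \<le> BX" if s: "s \<ge> 0" for s
    proof -
      have i1: "X s \<in> cball cR rR" using inS[of s] s tau0 delays by auto
      have i2: "H (s - tauLR) \<in> cball cL rL" using inS[of "s - tauLR"] s tau0 by auto
      have "norm (aR (X s) + adjoint K (H (s - tauLR))) \<le> norm (aR (X s)) + norm (adjoint K (H (s - tauLR)))"
        by (rule norm_triangle_ineq)
      also have "norm (aR (X s)) \<le> norm (aR cR) + \<bar>LR\<bar> * rR" by (rule lip_bound[OF LR i1])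
      also have "norm (adjoint K (H (s - tauLR))) \<le> CK * norm (H (s - tauLR))" by (rule adj_bound[OF lin onK])
      also have "\<dots> \<le> CK * (norm cL + rL)" by (rule mult_left_mono[OF cball_norm[OF i2] CK0])
      finally show ?thesis unfolding BX_def by simp
    qed
    have bP: "norm (aP (P s)) \<le> BP" if s: "s \<ge> 0" for s
    proof -
      have i1: "P s \<in> cball cP rP" using inS[of s] s tau0 delays by auto
      show ?thesis unfolding BP_def by (rule lip_bound[OF LP i1])
    qed
    have lip: "norm ((H s, X s, P s) - (H t, X t, P t)) \<le> (BH + BX + BP) * \<bar>s - t\<bar>"
      if st: "0 \<le> s" "0 \<le> t" for s t
    proof -
      have "norm (H s - H t) \<le> BH * \<bar>s - t\<bar>" by (rule vec_deriv_lip[OF derivs(1) bH st])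
      moreover have "norm (X s - X t) \<le> BX * \<bar>s - t\<bar>" by (rule vec_deriv_lip[OF derivs(2) bX st])
      moreover have "norm (P s - P t) \<le> BP * \<bar>s - t\<bar>" by (rule vec_deriv_lip[OF derivs(3) bP st])
      moreover have "(BH + BX + BP) * \<bar>s - t\<bar> = BH * \<bar>s - t\<bar> + BX * \<bar>s - t\<bar> + BP * \<bar>s - t\<bar>"
        by (simp only: distrib_right)
      ultimately show ?thesis using norm3_le[of "H s" "X s" "P s" "H t" "X t" "P t"]
        by linarith
    qed
    show "((\<lambda>t. (H t, X t, P t)) \<longlongrightarrow> (Hs, Xs, Ps)) at_top"
      by (rule attract[OF small_gain lip])
  qed
  show ?thesis by (intro conjI uniq stab att alph LK)
qed

end
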